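(* Let $d\ge3$, let $I\subset\mathbb{R}$ be an open interval and $V\subset\mathbb{R}^{d-1}$ an open connected set, and let $\psi\in C^\infty(I\times V)$ satisfy $\mathrm{rank}\,\nabla^2_y\partial_t\psi(t;y)=d-1$ for all $(t,y)\in I\times V$. If $c\in C^\infty(I\times V)$ satisfies $\partial_t^2\nabla_y^2\psi(t;y)=c(t;y)\,\partial_t\nabla^2_y\psi(t;y)$ on $I\times V$, then $c(t;y)$ does not depend on $y$, i.e. $c(t;y)=c(t)$ for some function $c$ on $I$.
   Context: $\nabla^2_y$ denotes the Hessian in the variables $y\in\mathbb{R}^{d-1}$. *)

theory Defs
  imports "HOL-Analysis.Analysis"
begin

definition partial :: "('a::real_normed_vector \<Rightarrow> real) \<Rightarrow> 'a \<Rightarrow> 'a \<Rightarrow> real" where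
  "partial f v = (\<lambda>x. frechet_derivative f (at x) v)"

text \<open>Iterated partial derivative: the last list element is applied first.\<close>
fun iterated_partial :: "('a::real_normed_vector \<Rightarrow> real) \<Rightarrow> 'a list \<Rightarrow> 'a \<Rightarrow> real" where
  "iterated_partial f [] = f"
| "iterated_partial f (v # vs) = partial (iterated_partial f vs) v"

definition smooth_on :: "'a::euclidean_space set \<Rightarrow> ('a \<Rightarrow> real) \<Rightarrow> bool" where
  "smooth_on S f \<longleftrightarrow> (\<forall>vs. set vs \<subseteq> Basis \<longrightarrow> iterated_partial f vs differentiable_on S)"

text \<open>Variables (t;y) with t real and y in R^(d-1) = real^'n.
  The time direction and the y_i directions.\<close>
definition dir_t :: "real \<times> (real^'n)" where "dir_t = (1, 0)"
definition dir_y :: "'n \<Rightarrow> real \<times> (real^'n)" where "dir_y i = (0, axis i 1)"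

definition hess_y_dt :: "(real \<times> (real^'n) \<Rightarrow> real) \<Rightarrow> real \<times> (real^'n) \<Rightarrow> real^'n^'n" where
  "hess_y_dt psi z = (\<chi> i j. iterated_partial psi [dir_y i, dir_y j, dir_t] z)"

definition hess_y_dtt :: "(real \<times> (real^'n) \<Rightarrow> real) \<Rightarrow> real \<times> (real^'n) \<Rightarrow> real^'n^'n" where
  "hess_y_dtt psi z = (\<chi> i j. iterated_partial psi [dir_t, dir_t, dir_y i, dir_y j] z)"

end

theory Submission imports Defs begin

lemma partial_lin:
  fixes f :: "'a::real_normed_vector \<Rightarrow> real"
  assumes "f differentiable (at p)"
  shows "(f has_derivative frechet_derivative f (at p)) (at p)"
  using assms frechet_derivative_works by blast

lemma young_half:
  fixes f :: "'a::real_normed_vector \<Rightarrow> real"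
  assumes S: "open S" and a: "a \<in> S"
    and fd: "\<And>y. y \<in> S \<Longrightarrow> f differentiable (at y)"
    and gd: "partial f u differentiable (at a)"
    and e: "e > 0"
  shows "\<exists>d>0. \<forall>h. 0 < h \<and> h < d \<longrightarrow>
     \<bar>f (a + h*\<^sub>R u + h*\<^sub>R v) - f (a + h*\<^sub>R u) - f (a + h*\<^sub>R v) + f a
        - h^2 * partial (partial f u) v a\<bar> \<le> e * h^2 * (2*norm u + norm v)"
proof -
  define gu where "gu = partial f u"
  define L where "L = frechet_derivative gu (at a)"
  have L: "(gu has_derivative L) (at a)" using gd frechet_derivative_works gu_def L_def by blast
  have Lv: "partial (partial f u) v a = L v" by (simp add: partial_def L_def gu_def)
  have blL: "bounded_linear L" using L has_derivative_bounded_linear by blast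
  obtain d2 where d2: "d2 > 0" "\<And>y. norm (y - a) < d2 \<Longrightarrow> norm (gu y - gu a - L (y - a)) \<le> e * norm (y - a)"
    using L e unfolding has_derivative_at_alt by blast
  obtain d1 where d1: "d1 > 0" "ball a d1 \<subseteq> S" using S a openE by blast
  define d where "d = min d1 d2 / (norm u + norm v + 1)"
  have np: "norm u + norm v + 1 > 0" by (smt (verit) norm_ge_zero)
  have dpos: "d > 0" using d1 d2 np by (simp add: d_def)
  show ?thesis
  proof (intro exI[of _ d] conjI allI impI dpos)
    fix h :: real assume h: "0 < h \<and> h < d"
    have hb: "h * (norm u + norm v) < min d1 d2"
    proof -
      have "h * (norm u + norm v) \<le> h * (norm u + norm v + 1)" using h by simp
      also have "\<dots> < d * (norm u + norm v + 1)"
        using h np by (intro mult_strict_right_mono) auto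
      also have "\<dots> = min d1 d2" using np by (simp add: d_def)
      finally show ?thesis .
    qed
    have nb: "norm (s *\<^sub>R u + t *\<^sub>R v) < min d1 d2" if "0 \<le> s" "s \<le> h" "0 \<le> t" "t \<le> h" for s t
    proof -
      have "norm (s *\<^sub>R u + t *\<^sub>R v) \<le> norm (s *\<^sub>R u) + norm (t *\<^sub>R v)"
        by (rule norm_triangle_ineq)
      also have "\<dots> = s * norm u + t * norm v" using that by simp
      also have "\<dots> \<le> h * norm u + h * norm v"
        using that by (intro add_mono mult_right_mono) auto
      finally show ?thesis using hb by (simp add: distrib_left)
    qed
    have inS: "a + (s *\<^sub>R u + t *\<^sub>R v) \<in> S" if "0 \<le> s" "s \<le> h" "0 \<le> t" "t \<le> h" for s t
    proof -
      have "a + (s *\<^sub>R u + t *\<^sub>R v) \<in> ball a d1"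
        using nb[OF that] by (metis add_diff_cancel_left' dist_commute dist_norm mem_ball min_less_iff_conj)
      then show ?thesis using d1 by blast
    qed
    have dline: "((\<lambda>s. f (a + s *\<^sub>R u + w)) has_field_derivative gu (a + s *\<^sub>R u + w)) (at s)"
      if "a + s *\<^sub>R u + w \<in> S" for s w
    proof -
      let ?p = "a + s *\<^sub>R u + w"
      have fp: "(f has_derivative frechet_derivative f (at ?p)) (at ?p)"
        using fd[OF that] frechet_derivative_works by blast
      have ln: "((\<lambda>s. a + s *\<^sub>R u + w) has_derivative (\<lambda>s. s *\<^sub>R u)) (at s)"
        by (auto intro!: derivative_eq_intros)
      have "((\<lambda>s. f (a + s *\<^sub>R u + w)) has_derivative (\<lambda>s. frechet_derivative f (at ?p) (s *\<^sub>R u))) (at s)"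
        using has_derivative_compose[OF ln fp] by (simp add: o_def)
      moreover have "(\<lambda>s. frechet_derivative f (at ?p) (s *\<^sub>R u)) = (*) (gu ?p)"
        using fp has_derivative_bounded_linear[OF fp]
        by (auto simp: gu_def partial_def fun_eq_iff linear_simps(5))
      ultimately show ?thesis by (simp add: has_field_derivative_def)
    qed
    define g where "g s = f (a + s *\<^sub>R u + h *\<^sub>R v) - f (a + s *\<^sub>R u + 0)" for s
    have gder: "(g has_real_derivative (gu (a + s *\<^sub>R u + h *\<^sub>R v) - gu (a + s *\<^sub>R u + 0))) (at s)"
      if s: "0 \<le> s" "s \<le> h" for s
    proof -
      have 1: "a + s *\<^sub>R u + h *\<^sub>R v \<in> S" using inS[of s h] s h by (simp add: add.assoc)
      have 2: "a + s *\<^sub>R u + 0 \<in> S" using inS[of s 0] s h by simp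
      show ?thesis
        unfolding g_def[abs_def] by (intro DERIV_diff dline 1 2)
    qed
    obtain z where z: "0 < z" "z < h" "g h - g 0 = (h - 0) * (gu (a + z *\<^sub>R u + h *\<^sub>R v) - gu (a + z *\<^sub>R u + 0))"
      using MVT2[of 0 h g "\<lambda>s. gu (a + s *\<^sub>R u + h *\<^sub>R v) - gu (a + s *\<^sub>R u + 0)", OF _ gder] h by auto
    define y1 where "y1 = a + z *\<^sub>R u + h *\<^sub>R v"
    define y2 where "y2 = a + z *\<^sub>R u"
    have n1: "norm (y1 - a) \<le> h * (norm u + norm v)"
    proof -
      have "norm (y1 - a) \<le> norm (z *\<^sub>R u) + norm (h *\<^sub>R v)" unfolding y1_def
        by (metis add_diff_cancel_left' add.assoc norm_triangle_ineq)
      also have "\<dots> = z * norm u + h * norm v" using z h by simp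
      also have "\<dots> \<le> h * norm u + h * norm v" using z by (intro add_mono mult_right_mono) auto
      finally show ?thesis by (simp add: distrib_left)
    qed
    have n2: "norm (y2 - a) \<le> h * norm u"
      unfolding y2_def using z by (simp add: mult_right_mono)
    have r1: "\<bar>gu y1 - gu a - L (y1 - a)\<bar> \<le> e * (h * (norm u + norm v))"
      using d2(2)[of y1] n1 hb e by (smt (verit) mult_left_mono real_norm_def)
    have r2: "\<bar>gu y2 - gu a - L (y2 - a)\<bar> \<le> e * (h * norm u)"
      using d2(2)[of y2] n2 hb e
      by (smt (verit) mult_left_mono real_norm_def mult_nonneg_nonneg norm_ge_zero h)
    have Ldiff: "L (y1 - a) - L (y2 - a) = h * L v"
    proof -
      have "L (y1 - a) - L (y2 - a) = L (y1 - y2)" by (simp add: linear_simps(2)[OF blL])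
      also have "y1 - y2 = h *\<^sub>R v" by (simp add: y1_def y2_def)
      finally show ?thesis by (simp add: linear_simps(5)[OF blL])
    qed
    have est: "\<bar>gu y1 - gu y2 - h * L v\<bar> \<le> e * h * (2 * norm u + norm v)"
      using r1 r2 Ldiff by (simp add: algebra_simps)
    have Delta: "f (a + h*\<^sub>R u + h*\<^sub>R v) - f (a + h*\<^sub>R u) - f (a + h*\<^sub>R v) + f a = h * (gu y1 - gu y2)"
      using z(3) by (simp add: g_def y1_def y2_def algebra_simps)
    have "\<bar>h * (gu y1 - gu y2) - h^2 * L v\<bar> = h * \<bar>gu y1 - gu y2 - h * L v\<bar>"
      using h by (simp add: power2_eq_square abs_mult right_diff_distrib[symmetric] mult.assoc)
    also have "\<dots> \<le> h * (e * h * (2 * norm u + norm v))" using est h by simp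
    finally show "\<bar>f (a + h*\<^sub>R u + h*\<^sub>R v) - f (a + h*\<^sub>R u) - f (a + h*\<^sub>R v) + f a
        - h^2 * partial (partial f u) v a\<bar> \<le> e * h^2 * (2*norm u + norm v)"
      by (simp add: Delta Lv power2_eq_square mult_ac)
  qed
qed

lemma young:
  fixes f :: "'a::real_normed_vector \<Rightarrow> real"
  assumes S: "open S" and a: "a \<in> S"
    and fd: "\<And>y. y \<in> S \<Longrightarrow> f differentiable (at y)"
    and gu: "partial f u differentiable (at a)"
    and gv: "partial f v differentiable (at a)"
  shows "partial (partial f u) v a = partial (partial f v) u a"
proof (rule ccontr)
  define A where "A = partial (partial f u) v a"
  define B where "B = partial (partial f v) u a"
  assume "A \<noteq> B"
  then have D: "\<bar>A - B\<bar> > 0" by simp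
  define K where "K = 3 * norm u + 3 * norm v + 1"
  have K: "K > 0" unfolding K_def using norm_ge_zero[of u] norm_ge_zero[of v] by linarith
  define e where "e = \<bar>A - B\<bar> / (2 * K)"
  have e: "e > 0" using D K by (simp add: e_def)
  obtain d1 where d1: "d1 > 0" "\<And>h. 0 < h \<and> h < d1 \<Longrightarrow>
     \<bar>f (a + h*\<^sub>R u + h*\<^sub>R v) - f (a + h*\<^sub>R u) - f (a + h*\<^sub>R v) + f a
        - h^2 * A\<bar> \<le> e * h^2 * (2*norm u + norm v)"
    using young_half[OF S a fd gu e, of v] unfolding A_def by blast
  obtain d2 where d2: "d2 > 0" "\<And>h. 0 < h \<and> h < d2 \<Longrightarrow>
     \<bar>f (a + h*\<^sub>R v + h*\<^sub>R u) - f (a + h*\<^sub>R v) - f (a + h*\<^sub>R u) + f a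
        - h^2 * B\<bar> \<le> e * h^2 * (2*norm v + norm u)"
    using young_half[OF S a fd gv e, of u] unfolding B_def by blast
  define h where "h = min d1 d2 / 2"
  have h: "0 < h" "h < d1" "h < d2" using d1 d2 by (auto simp: h_def)
  define X where "X = f (a + h*\<^sub>R u + h*\<^sub>R v) - f (a + h*\<^sub>R u) - f (a + h*\<^sub>R v) + f a"
  have X2: "f (a + h*\<^sub>R v + h*\<^sub>R u) - f (a + h*\<^sub>R v) - f (a + h*\<^sub>R u) + f a = X"
    unfolding X_def by (simp add: algebra_simps)
  have 1: "\<bar>X - h^2 * A\<bar> \<le> e * h^2 * (2*norm u + norm v)" using d1(2)[of h] h X_def by simp
  have 2: "\<bar>X - h^2 * B\<bar> \<le> e * h^2 * (2*norm v + norm u)" using d2(2)[of h] h X2 by simp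
  have "h^2 * \<bar>A - B\<bar> = \<bar>(X - h^2 * B) - (X - h^2 * A)\<bar>"
    by (simp add: abs_mult left_diff_distrib[symmetric] mult.commute)
  also have "\<dots> \<le> e * h^2 * (2*norm u + norm v) + e * h^2 * (2*norm v + norm u)"
    using 1 2 by linarith
  also have "\<dots> = e * h^2 * (K - 1)" by (simp add: K_def algebra_simps)
  also have "\<dots> < e * h^2 * (2 * K)" using e h K by (intro mult_strict_left_mono) auto
  also have "\<dots> = h^2 * \<bar>A - B\<bar>" using K by (simp add: e_def)
  finally show False by simp
qed

lemma partial_local:
  assumes "open S" "\<And>z. z \<in> S \<Longrightarrow> f z = g z" "x \<in> S"
  shows "partial f v x = partial g v x"
proof -
  have "(\<lambda>D. (f has_derivative D) (at x)) = (\<lambda>D. (g has_derivative D) (at x))"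
  proof
    fix D
    show "(f has_derivative D) (at x) = (g has_derivative D) (at x)"
      using has_derivative_transform_within_open[of f D x UNIV S g]
            has_derivative_transform_within_open[of g D x UNIV S f] assms by auto
  qed
  then show ?thesis by (simp add: partial_def frechet_derivative_def)
qed

lemma partial_mult:
  fixes f g :: "'a::real_normed_vector \<Rightarrow> real"
  assumes "f differentiable (at x)" "g differentiable (at x)"
  shows "partial (\<lambda>z. f z * g z) v x = partial f v x * g x + f x * partial g v x"
proof -
  have f: "(f has_derivative frechet_derivative f (at x)) (at x)" and g: "(g has_derivative frechet_derivative g (at x)) (at x)"
    using assms frechet_derivative_works by blast+
  have "((\<lambda>z. f z * g z) has_derivative (\<lambda>h. f x * frechet_derivative g (at x) h + frechet_derivative f (at x) h * g x)) (at x)"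
    by (rule has_derivative_mult[OF f g])
  from frechet_derivative_at[OF this] show ?thesis
    by (simp add: partial_def) (metis add.commute)
qed

lemma basis_t: "(dir_t :: real \<times> (real^'n)) \<in> Basis"
  by (simp add: dir_t_def Basis_prod_def)

lemma basis_y: "(dir_y i :: real \<times> (real^'n)) \<in> Basis"
  by (force simp: dir_y_def Basis_prod_def Basis_vec_def)

theorem corollary4p2:
  fixes I :: "real set" and V :: "(real^'n) set"
    and psi c :: "real \<times> (real^'n) \<Rightarrow> real"
  assumes d: "CARD('n) \<ge> 2"
    and I: "open I" "is_interval I"
    and V: "open V" "connected V"
    and psi_smooth: "smooth_on (I \<times> V) psi"
    and rank: "\<And>t y. t \<in> I \<Longrightarrow> y \<in> V \<Longrightarrow> rank (hess_y_dt psi (t, y)) = CARD('n)"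
    and c_smooth: "smooth_on (I \<times> V) c"
    and eq: "\<And>t y. t \<in> I \<Longrightarrow> y \<in> V \<Longrightarrow>
               hess_y_dtt psi (t, y) = c (t, y) *\<^sub>R hess_y_dt psi (t, y)"
  shows "\<exists>g :: real \<Rightarrow> real. \<forall>t\<in>I. \<forall>y\<in>V. c (t, y) = g t"
proof -
  define S where "S = I \<times> V"
  have S: "open S" using I V by (simp add: S_def open_Times)
  define P where "P = iterated_partial psi"
  define T where "T = (dir_t :: real \<times> (real^'n))"
  define Y where "Y = (dir_y :: 'n \<Rightarrow> real \<times> (real^'n))"
  have TB: "T \<in> Basis" by (simp add: T_def basis_t)
  have YB: "Y i \<in> Basis" for i by (simp add: Y_def basis_y)
  have Pcons: "P (v # vs) = partial (P vs) v" for v vs by (simp add: P_def)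
  have diffP: "P vs differentiable (at z)" if "set vs \<subseteq> Basis" "z \<in> S" for vs z
    using psi_smooth that S unfolding smooth_on_def P_def S_def
    by (metis differentiable_on_eq_differentiable_at)
  have cdiff: "c differentiable (at z)" if "z \<in> S" for z
    using c_smooth[unfolded smooth_on_def, rule_format, of "[]"] that S unfolding S_def
    by (metis differentiable_on_eq_differentiable_at empty_subsetI iterated_partial.simps(1) list.set(1))
  have SW: "P (u # v # vs) z = P (v # u # vs) z"
    if "u \<in> Basis" "v \<in> Basis" "set vs \<subseteq> Basis" "z \<in> S" for u v vs z
  proof -
    have "partial (partial (P vs) v) u z = partial (partial (P vs) u) v z"
    proof (rule young[OF S \<open>z \<in> S\<close>])
      show "P vs differentiable (at y)" if "y \<in> S" for y using diffP that \<open>set vs \<subseteq> Basis\<close> by blast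
      show "partial (P vs) v differentiable (at z)" using diffP[of "v # vs" z] that by (simp add: Pcons)
      show "partial (P vs) u differentiable (at z)" using diffP[of "u # vs" z] that by (simp add: Pcons)
    qed
    then show ?thesis by (simp add: Pcons)
  qed
  have CG: "P (w # xs) z = P (w # ys) z" if "\<And>z. z \<in> S \<Longrightarrow> P xs z = P ys z" "z \<in> S" for w xs ys z
    unfolding Pcons using partial_local[of S "P xs" "P ys" z w, OF S that(1) that(2)] by blast
  have st1: "P [T, Y i, Y j, T] z = P [T, T, Y i, Y j] z" if "z \<in> S" for i j z
  proof -
    have a: "P [Y j, T] z = P [T, Y j] z" if "z \<in> S" for z using SW[OF YB[of j] TB _ that, of "[]"] by simp
    have b: "P [Y i, Y j, T] z = P [Y i, T, Y j] z" if "z \<in> S" for z using CG[OF a that] .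
    have c: "P [Y i, T, Y j] z = P [T, Y i, Y j] z" if "z \<in> S" for z using SW[OF YB[of i] TB _ that, of "[Y j]"] YB by simp
    show ?thesis using CG[of "[Y i, Y j, T]" "[T, Y i, Y j]" z T] b c that by simp
  qed
  have E1: "P [T, Y i, Y j, T] z = c z * P [Y i, Y j, T] z" if "z \<in> S" for i j z
  proof -
    obtain t y where z: "z = (t, y)" "t \<in> I" "y \<in> V" using \<open>z \<in> S\<close> S_def by auto
    have "hess_y_dtt psi z $ i $ j = (c z *\<^sub>R hess_y_dt psi z) $ i $ j" using eq z by simp
    then have "P [T, T, Y i, Y j] z = c z * P [Y i, Y j, T] z"
      by (simp add: hess_y_dtt_def hess_y_dt_def P_def T_def Y_def)
    then show ?thesis using st1 that by simp
  qed
  have E2: "P [T, Y k, Y i, Y j, T] z = partial c (Y k) z * P [Y i, Y j, T] z + c z * P [Y k, Y i, Y j, T] z"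
    if "z \<in> S" for i j k z
  proof -
    have "P [Y k, T, Y i, Y j, T] z = partial (\<lambda>z. c z * P [Y i, Y j, T] z) (Y k) z"
      unfolding Pcons[of "Y k"] by (rule partial_local[OF S E1 that])
    also have "\<dots> = partial c (Y k) z * P [Y i, Y j, T] z + c z * P [Y k, Y i, Y j, T] z"
      using partial_mult[OF cdiff[OF that] diffP[of "[Y i, Y j, T]" z]] that TB YB
      by (simp add: Pcons)
    finally show ?thesis using SW[OF YB[of k] TB _ that, of "[Y i, Y j, T]"] TB YB by simp
  qed
  have st5: "P [Y k, Y i, Y j, T] z = P [Y j, Y i, Y k, T] z" if "z \<in> S" for i j k z
  proof -
    have a: "P [Y i, Y j, T] z = P [Y j, Y i, T] z" if "z \<in> S" for z using SW[OF YB[of i] YB[of j] _ that, of "[T]"] TB by simp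
    have b: "P [Y k, Y i, Y j, T] z = P [Y k, Y j, Y i, T] z" using CG[OF a that] .
    have c: "P [Y k, Y j, Y i, T] z = P [Y j, Y k, Y i, T] z" using SW[OF YB[of k] YB[of j] _ that, of "[Y i, T]"] TB YB by simp
    have d: "P [Y k, Y i, T] z = P [Y i, Y k, T] z" if "z \<in> S" for z using SW[OF YB[of k] YB[of i] _ that, of "[T]"] TB by simp
    have e: "P [Y j, Y k, Y i, T] z = P [Y j, Y i, Y k, T] z" using CG[OF d that] .
    show ?thesis using b c e by simp
  qed
  have st6: "P [T, Y k, Y i, Y j, T] z = P [T, Y j, Y i, Y k, T] z" if "z \<in> S" for i j k z
    using CG[OF st5 that] .
  have key: "partial c (Y k) z * P [Y i, Y j, T] z = partial c (Y j) z * P [Y i, Y k, T] z"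
    if "z \<in> S" for i j k z
    using E2[where i=i and j=j and k=k, OF that] E2[where i=i and j=k and k=j, OF that] st5[where i=i and j=j and k=k, OF that] st6[where i=i and j=j and k=k, OF that] by simp
  have ck0: "partial c (Y k) z = 0" if "z \<in> S" for k z
  proof -
    obtain j :: 'n where jk: "j \<noteq> k"
    proof -
      have "\<not> (\<forall>j::'n. j = k)"
      proof
        assume "\<forall>j::'n. j = k"
        then have "(UNIV :: 'n set) = {k}" by auto
        then have "CARD('n) = 1" by (metis card.empty card.insert empty_iff finite.emptyI One_nat_def)
        then show False using d by simp
      qed
      then show ?thesis using that by blast
    qed
    obtain t y where z: "z = (t, y)" "t \<in> I" "y \<in> V" using \<open>z \<in> S\<close> S_def by auto
    define M where "M = hess_y_dt psi z"
    have M: "M $ i $ l = P [Y i, Y l, T] z" for i l by (simp add: M_def hess_y_dt_def P_def T_def Y_def)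
    define x where "x = partial c (Y k) z *\<^sub>R axis j 1 - partial c (Y j) z *\<^sub>R (axis k 1 :: real^'n)"
    have "M *v x = 0"
    proof -
      have "M *v x = partial c (Y k) z *\<^sub>R column j M - partial c (Y j) z *\<^sub>R column k M"
        by (simp add: x_def matrix_vector_mult_diff_distrib matrix_vector_mult_scaleR matrix_vector_mult_basis)
      also have "\<dots> = 0"
        by (simp add: vec_eq_iff column_def M key[OF that] mult.commute)
      finally show ?thesis .
    qed
    moreover have "rank M = CARD('n)" using rank z by (simp add: M_def)
    ultimately have "x = 0" using matrix_nonfull_linear_equations_eq[of M] by blast
    then have "x $ j = 0" by simp
    then show ?thesis using jk by (simp add: x_def axis_def)
  qed
  have const: "c (t, y) = c (t, y')" if t: "t \<in> I" and y: "y \<in> V" "y' \<in> V" for t y y'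
  proof (rule has_derivative_zero_unique_connected[OF V, where f = "\<lambda>y. c (t, y)"])
    fix w assume w: "w \<in> V"
    have tw: "(t, w) \<in> S" using t w by (simp add: S_def)
    define D where "D = frechet_derivative c (at (t, w))"
    have cD: "(c has_derivative D) (at (t, w))" using cdiff[OF tw] frechet_derivative_works D_def by blast
    have bl: "bounded_linear D" using cD has_derivative_bounded_linear by blast
    have pw: "((\<lambda>y. (t, y)) has_derivative (\<lambda>h. (0, h))) (at w)"
      by (auto intro!: derivative_eq_intros)
    have comp: "((\<lambda>y. c (t, y)) has_derivative (\<lambda>h. D (0, h))) (at w)"
      using has_derivative_compose[OF pw cD] by (simp add: o_def)
    have Db: "D (0, b) = 0" if "b \<in> Basis" for b :: "real^'n"
    proof -
      obtain i where "b = axis i 1" using \<open>b \<in> Basis\<close> by (auto simp: Basis_vec_def)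
      then have "(0, b) = Y i" by (simp add: Y_def dir_y_def)
      then show ?thesis using ck0[OF tw, of i] by (simp add: partial_def D_def)
    qed
    have "D (0, h) = 0" for h :: "real^'n"
    proof -
      have sc: "D (0, r *\<^sub>R b) = r * D (0, b)" for r and b :: "real^'n"
        using linear_simps(5)[OF bl, of r "(0, b)"] by simp
      have "(0::real, h) = (\<Sum>b\<in>Basis. (0, (h \<bullet> b) *\<^sub>R b))"
        by (simp add: sum_prod euclidean_representation)
      then have "D (0, h) = (\<Sum>b\<in>Basis. D (0, (h \<bullet> b) *\<^sub>R b))"
        by (simp add: linear_sum[OF bounded_linear.linear[OF bl]])
      also have "\<dots> = (\<Sum>b\<in>Basis. (h \<bullet> b) * D (0, b))" by (simp add: sc)
      also have "\<dots> = 0" using Db by simp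
      finally show ?thesis .
    qed
    then show "((\<lambda>y. c (t, y)) has_derivative (\<lambda>h. 0)) (at w)" using comp by simp
  qed (use y in auto)
  show ?thesis
  proof (intro exI[of _ "\<lambda>t. c (t, SOME y. y \<in> V)"] ballI)
    fix t y assume "t \<in> I" "y \<in> V"
    then show "c (t, y) = c (t, SOME y. y \<in> V)" using const someI[of "\<lambda>y. y \<in> V" y] by blast
  qed
qed

end
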